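(* Let $\mathfrak g$ be a simple Lie superalgebra with an invariant supersymmetric bilinear form $(\cdot|\cdot)$, let $x\in\mathfrak g$, and let $\phi$ be a conjugate-linear involution of $\mathfrak g$ such that $(x|x)$ is a non-zero real number and $\phi(x)=x$. Then $\overline{(\phi(a)|\phi(b))}=(a|b)$ for all $a,b\in\mathfrak g$.
   Context: A conjugate-linear involution of a Lie superalgebra is a conjugate-linear, parity-preserving bijection $\phi$ with $\phi([a,b])=[\phi(a),\phi(b)]$ and $\phi^2=\mathrm{id}$. *)

theory Defs
  imports Complex_Main
begin

text \<open>Parities are booleans: False = even, True = odd.\<close>

definition gpart :: "'g set \<Rightarrow> 'g set \<Rightarrow> bool \<Rightarrow> 'g set" where
  "gpart G0 G1 p = (if p then G1 else G0)"

definition psign :: "bool \<Rightarrow> bool \<Rightarrow> complex" where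
  "psign p q = (if p \<and> q then -1 else 1)"

definition lie_superalgebra ::
  "(complex \<Rightarrow> 'g::ab_group_add \<Rightarrow> 'g) \<Rightarrow> 'g set \<Rightarrow> 'g set \<Rightarrow> ('g \<Rightarrow> 'g \<Rightarrow> 'g) \<Rightarrow> bool" where
  "lie_superalgebra sc G0 G1 br \<longleftrightarrow>
     vector_space sc \<and>
     module.subspace sc G0 \<and> module.subspace sc G1 \<and> G0 \<inter> G1 = {0} \<and>
     (\<forall>a. \<exists>u\<in>G0. \<exists>v\<in>G1. a = u + v) \<and>
     (\<forall>a b c. br (a + b) c = br a c + br b c) \<and>
     (\<forall>a b c. br a (b + c) = br a b + br a c) \<and>
     (\<forall>k a b. br (sc k a) b = sc k (br a b)) \<and>
     (\<forall>k a b. br a (sc k b) = sc k (br a b)) \<and>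
     (\<forall>p q a b. a \<in> gpart G0 G1 p \<longrightarrow> b \<in> gpart G0 G1 q \<longrightarrow>
        br a b \<in> gpart G0 G1 (p \<noteq> q)) \<and>
     (\<forall>p q a b. a \<in> gpart G0 G1 p \<longrightarrow> b \<in> gpart G0 G1 q \<longrightarrow>
        br a b = - sc (psign p q) (br b a)) \<and>
     (\<forall>p q a b c. a \<in> gpart G0 G1 p \<longrightarrow> b \<in> gpart G0 G1 q \<longrightarrow>
        br a (br b c) = br (br a b) c + sc (psign p q) (br b (br a c)))"

definition graded_ideal ::
  "(complex \<Rightarrow> 'g::ab_group_add \<Rightarrow> 'g) \<Rightarrow> 'g set \<Rightarrow> 'g set \<Rightarrow> ('g \<Rightarrow> 'g \<Rightarrow> 'g) \<Rightarrow> 'g set \<Rightarrow> bool" where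
  "graded_ideal sc G0 G1 br I \<longleftrightarrow>
     module.subspace sc I \<and>
     (\<forall>a\<in>I. \<exists>u\<in>I \<inter> G0. \<exists>v\<in>I \<inter> G1. a = u + v) \<and>
     (\<forall>a b. b \<in> I \<longrightarrow> br a b \<in> I)"

definition simple_lie_superalgebra ::
  "(complex \<Rightarrow> 'g::ab_group_add \<Rightarrow> 'g) \<Rightarrow> 'g set \<Rightarrow> 'g set \<Rightarrow> ('g \<Rightarrow> 'g \<Rightarrow> 'g) \<Rightarrow> bool" where
  "simple_lie_superalgebra sc G0 G1 br \<longleftrightarrow>
     lie_superalgebra sc G0 G1 br \<and>
     (\<exists>a b. br a b \<noteq> 0) \<and>
     (\<forall>I. graded_ideal sc G0 G1 br I \<longrightarrow> I = {0} \<or> I = UNIV)"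

definition invariant_supersymmetric_form ::
  "(complex \<Rightarrow> 'g::ab_group_add \<Rightarrow> 'g) \<Rightarrow> 'g set \<Rightarrow> 'g set \<Rightarrow> ('g \<Rightarrow> 'g \<Rightarrow> 'g)
    \<Rightarrow> ('g \<Rightarrow> 'g \<Rightarrow> complex) \<Rightarrow> bool" where
  "invariant_supersymmetric_form sc G0 G1 br B \<longleftrightarrow>
     (\<forall>a b c. B (a + b) c = B a c + B b c) \<and>
     (\<forall>a b c. B a (b + c) = B a b + B a c) \<and>
     (\<forall>k a b. B (sc k a) b = k * B a b) \<and>
     (\<forall>k a b. B a (sc k b) = k * B a b) \<and>
     (\<forall>a b. a \<in> G0 \<longrightarrow> b \<in> G1 \<longrightarrow> B a b = 0) \<and>
     (\<forall>p q a b. a \<in> gpart G0 G1 p \<longrightarrow> b \<in> gpart G0 G1 q \<longrightarrow>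
        B a b = psign p q * B b a) \<and>
     (\<forall>a b c. B (br a b) c = B a (br b c))"

definition conj_linear_involution ::
  "(complex \<Rightarrow> 'g::ab_group_add \<Rightarrow> 'g) \<Rightarrow> 'g set \<Rightarrow> 'g set \<Rightarrow> ('g \<Rightarrow> 'g \<Rightarrow> 'g) \<Rightarrow> ('g \<Rightarrow> 'g) \<Rightarrow> bool" where
  "conj_linear_involution sc G0 G1 br \<phi> \<longleftrightarrow>
     (\<forall>a b. \<phi> (a + b) = \<phi> a + \<phi> b) \<and>
     (\<forall>k a. \<phi> (sc k a) = sc (cnj k) (\<phi> a)) \<and>
     \<phi> ` G0 \<subseteq> G0 \<and> \<phi> ` G1 \<subseteq> G1 \<and>
     bij \<phi> \<and>
     (\<forall>a b. \<phi> (br a b) = br (\<phi> a) (\<phi> b)) \<and>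
     (\<forall>a. \<phi> (\<phi> a) = a)"

end

theory Submission
  imports Defs "Jordan_Normal_Form.Char_Poly" "Jordan_Normal_Form.Determinant"
begin

lemma form_props_1:
  fixes C :: "'g::ab_group_add \<Rightarrow> 'g \<Rightarrow> complex"
  assumes "invariant_supersymmetric_form sc G0 G1 br C"
  shows "C (a+b) c = C a c + C b c"
  using assms unfolding invariant_supersymmetric_form_def by meson

lemma form_props_2:
  fixes C :: "'g::ab_group_add \<Rightarrow> 'g \<Rightarrow> complex"
  assumes "invariant_supersymmetric_form sc G0 G1 br C"
  shows "C a (b+c) = C a b + C a c"
  using assms unfolding invariant_supersymmetric_form_def by meson

lemma form_props_3:
  fixes C :: "'g::ab_group_add \<Rightarrow> 'g \<Rightarrow> complex"
  assumes "invariant_supersymmetric_form sc G0 G1 br C"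
  shows "C (sc k a) b = k * C a b"
  using assms unfolding invariant_supersymmetric_form_def by meson

lemma form_props_4:
  fixes C :: "'g::ab_group_add \<Rightarrow> 'g \<Rightarrow> complex"
  assumes "invariant_supersymmetric_form sc G0 G1 br C"
  shows "C a (sc k b) = k * C a b"
  using assms unfolding invariant_supersymmetric_form_def by meson

lemma form_props_5:
  fixes C :: "'g::ab_group_add \<Rightarrow> 'g \<Rightarrow> complex"
  assumes "invariant_supersymmetric_form sc G0 G1 br C"
  shows "a\<in>G0 \<Longrightarrow> b\<in>G1 \<Longrightarrow> C a b = 0"
  using assms unfolding invariant_supersymmetric_form_def by meson

lemma form_props_6:
  fixes C :: "'g::ab_group_add \<Rightarrow> 'g \<Rightarrow> complex"
  assumes "invariant_supersymmetric_form sc G0 G1 br C"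
  shows "a \<in> gpart G0 G1 p \<Longrightarrow> b \<in> gpart G0 G1 q \<Longrightarrow> C a b = psign p q * C b a"
  using assms unfolding invariant_supersymmetric_form_def by meson

lemma form_props_7:
  fixes C :: "'g::ab_group_add \<Rightarrow> 'g \<Rightarrow> complex"
  assumes "invariant_supersymmetric_form sc G0 G1 br C"
  shows "C (br a b) c = C a (br b c)"
  using assms unfolding invariant_supersymmetric_form_def by meson

lemmas form_props = form_props_1 form_props_2 form_props_3 form_props_4 form_props_5 form_props_6 form_props_7

lemma form_ideal:
  assumes L: "lie_superalgebra sc G0 G1 br"
    and F: "invariant_supersymmetric_form sc G0 G1 br C"
  shows "graded_ideal sc G0 G1 br {a. \<forall>b. C b a = 0}"
proof -
  interpret vector_space sc using L unfolding lie_superalgebra_def by blast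
  note add1 = form_props(1)[OF F]
  note add2 = form_props(2)[OF F]
  note sc2 = form_props(4)[OF F]
  note ev = form_props(5)[OF F]
  note sym = form_props(6)[OF F]
  note inv = form_props(7)[OF F]
  have z2: "C a 0 = 0" for a using add2[of a 0 0] by simp
  have ev': "C b a = 0" if "a\<in>G0" "b\<in>G1" for a b
  proof -
    have "C a b = psign False True * C b a"
      by (rule sym) (use that in \<open>auto simp: gpart_def\<close>)
    then show ?thesis using ev[OF that] by (simp add: psign_def)
  qed
  from L have decomp: "\<And>a. \<exists>u\<in>G0. \<exists>v\<in>G1. a = u+v"
    unfolding lie_superalgebra_def by meson
  let ?J = "{a. \<forall>b. C b a = 0}"
  show ?thesis unfolding graded_ideal_def
  proof (intro conjI ballI allI impI)
    show "subspace ?J"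
      by (rule subspaceI) (auto simp: z2 add2 sc2)
  next
    fix a assume a: "a \<in> ?J"
    obtain u v where u: "u\<in>G0" and v: "v\<in>G1" and auv: "a = u+v" using decomp by blast
    have uJ: "u \<in> ?J"
    proof (intro CollectI allI)
      fix b
      obtain b0 b1 where b0: "b0\<in>G0" and b1: "b1\<in>G1" and bb: "b = b0+b1" using decomp by blast
      have "0 = C b0 a" using a by simp
      also have "\<dots> = C b0 u + C b0 v" using auv add2 by simp
      finally have "C b0 u = 0" using ev[OF b0 v] by simp
      then show "C b u = 0" using bb add1 ev'[OF u b1] by simp
    qed
    have vJ: "v \<in> ?J"
    proof (intro CollectI allI)
      fix b
      have "0 = C b a" using a by simp
      also have "\<dots> = C b u + C b v" using auv add2 by simp
      finally show "C b v = 0" using uJ by simp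
    qed
    show "\<exists>u\<in>?J \<inter> G0. \<exists>v\<in>?J \<inter> G1. a = u + v"
      using uJ vJ u v auv by blast
  next
    fix a b assume "b \<in> ?J"
    then show "br a b \<in> ?J" by (simp add: inv[symmetric])
  qed
qed

lemma form_lincomb:
  assumes "invariant_supersymmetric_form sc G0 G1 br C1"
    and "invariant_supersymmetric_form sc G0 G1 br C2"
  shows "invariant_supersymmetric_form sc G0 G1 br (\<lambda>a b. C1 a b - c * C2 a b)"
proof -
  note a1 = form_props(1)[OF assms(1)]
  note a2 = form_props(2)[OF assms(1)]
  note s1 = form_props(3)[OF assms(1)]
  note s2 = form_props(4)[OF assms(1)]
  note ev = form_props(5)[OF assms(1)]
  note sym = form_props(6)[OF assms(1)]
  note inv = form_props(7)[OF assms(1)]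
  note a1' = form_props(1)[OF assms(2)]
  note a2' = form_props(2)[OF assms(2)]
  note s1' = form_props(3)[OF assms(2)]
  note s2' = form_props(4)[OF assms(2)]
  note ev' = form_props(5)[OF assms(2)]
  note sym' = form_props(6)[OF assms(2)]
  note inv' = form_props(7)[OF assms(2)]
  show ?thesis unfolding invariant_supersymmetric_form_def
  proof (intro conjI allI impI)
    fix p q a b assume a: "a \<in> gpart G0 G1 p" and b: "b \<in> gpart G0 G1 q"
    show "C1 a b - c * C2 a b = psign p q * (C1 b a - c * C2 b a)"
      unfolding sym[OF a b] sym'[OF a b] by (simp add: algebra_simps)
  qed (simp_all add: a1 a2 s1 s2 ev a1' a2' s1' s2' ev' inv inv' algebra_simps)
qed

lemma cli_props_1:
  fixes \<phi> :: "'g::ab_group_add \<Rightarrow> 'g"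
  assumes "conj_linear_involution sc G0 G1 br \<phi>"
  shows "\<phi> (a + b) = \<phi> a + \<phi> b"
  using assms unfolding conj_linear_involution_def by meson

lemma cli_props_2:
  fixes \<phi> :: "'g::ab_group_add \<Rightarrow> 'g"
  assumes "conj_linear_involution sc G0 G1 br \<phi>"
  shows "\<phi> (sc k a) = sc (cnj k) (\<phi> a)"
  using assms unfolding conj_linear_involution_def by meson

lemma cli_props_3:
  fixes \<phi> :: "'g::ab_group_add \<Rightarrow> 'g"
  assumes "conj_linear_involution sc G0 G1 br \<phi>"
  shows "\<phi> ` G0 \<subseteq> G0"
  using assms unfolding conj_linear_involution_def by meson

lemma cli_props_4:
  fixes \<phi> :: "'g::ab_group_add \<Rightarrow> 'g"
  assumes "conj_linear_involution sc G0 G1 br \<phi>"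
  shows "\<phi> ` G1 \<subseteq> G1"
  using assms unfolding conj_linear_involution_def by meson

lemma cli_props_5:
  fixes \<phi> :: "'g::ab_group_add \<Rightarrow> 'g"
  assumes "conj_linear_involution sc G0 G1 br \<phi>"
  shows "\<phi> (br a b) = br (\<phi> a) (\<phi> b)"
  using assms unfolding conj_linear_involution_def by meson

lemmas cli_props = cli_props_1 cli_props_2 cli_props_3 cli_props_4 cli_props_5

lemma form_conj:
  assumes F: "invariant_supersymmetric_form sc G0 G1 br B"
    and P: "conj_linear_involution sc G0 G1 br \<phi>"
  shows "invariant_supersymmetric_form sc G0 G1 br (\<lambda>a b. cnj (B (\<phi> a) (\<phi> b)))"
proof -
  note add1 = form_props(1)[OF F]
  note add2 = form_props(2)[OF F]
  note sc1 = form_props(3)[OF F]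
  note sc2 = form_props(4)[OF F]
  note ev = form_props(5)[OF F]
  note sym = form_props(6)[OF F]
  note inv = form_props(7)[OF F]
  note padd = cli_props(1)[OF P] and psc = cli_props(2)[OF P] and p0 = cli_props(3)[OF P]
    and p1 = cli_props(4)[OF P] and pbr = cli_props(5)[OF P]
  have gp: "\<phi> a \<in> gpart G0 G1 p" if "a \<in> gpart G0 G1 p" for a p
    using p0 p1 that unfolding gpart_def by (cases p) auto
  have ps: "cnj (psign p q) = psign p q" for p q by (simp add: psign_def)
  show ?thesis unfolding invariant_supersymmetric_form_def
  proof (intro conjI allI impI)
    fix p q a b assume a: "a \<in> gpart G0 G1 p" and b: "b \<in> gpart G0 G1 q"
    show "cnj (B (\<phi> a) (\<phi> b)) = psign p q * cnj (B (\<phi> b) (\<phi> a))"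
      using sym[OF gp[OF a] gp[OF b]] ps by simp
  next
    fix a b assume "a \<in> G0" "b \<in> G1"
    then show "cnj (B (\<phi> a) (\<phi> b)) = 0" using ev[of "\<phi> a" "\<phi> b"] p0 p1 by (simp add: image_subset_iff)
  qed (simp_all add: add1 add2 sc1 sc2 padd psc pbr inv)
qed

theorem lemma3p1:
  fixes sc :: "complex \<Rightarrow> 'g::ab_group_add \<Rightarrow> 'g"
    and G0 G1 :: "'g set"
    and br :: "'g \<Rightarrow> 'g \<Rightarrow> 'g"
    and B :: "'g \<Rightarrow> 'g \<Rightarrow> complex"
    and \<phi> :: "'g \<Rightarrow> 'g"
    and x :: 'g
  assumes "simple_lie_superalgebra sc G0 G1 br"
    and "\<exists>Basis. finite_dimensional_vector_space sc Basis"
    and "invariant_supersymmetric_form sc G0 G1 br B"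
    and "conj_linear_involution sc G0 G1 br \<phi>"
    and "B x x \<in> \<real>" and "B x x \<noteq> 0"
    and "\<phi> x = x"
  shows "\<forall>a b. cnj (B (\<phi> a) (\<phi> b)) = B a b"
proof -
  note S = assms(1) and FB = assms(3) and P = assms(4)
  from S have L: "lie_superalgebra sc G0 G1 br" unfolding simple_lie_superalgebra_def by auto
  have ideal_cases: "I = {0} \<or> I = UNIV" if "graded_ideal sc G0 G1 br I" for I
    using S that unfolding simple_lie_superalgebra_def by auto
  from assms(2) obtain Basis where FD: "finite_dimensional_vector_space sc Basis" by auto
  interpret finite_dimensional_vector_space sc Basis by (rule FD)
  obtain bs where dbs: "distinct bs" and sbs: "set bs = Basis"
    using finite_distinct_list[OF finite_Basis] by auto
  define n where "n = length bs"
  define comb where "comb = (\<lambda>v. \<Sum>j\<in>{0..<n}. sc (v $ j) (bs ! j))"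
  define mf where "mf = (\<lambda>C. mat n n (\<lambda>(i,j). C (bs ! i) (bs ! j)) :: complex mat)"
  define B' where "B' = (\<lambda>a b. cnj (B (\<phi> a) (\<phi> b)))"
  have FB': "invariant_supersymmetric_form sc G0 G1 br B'"
    unfolding B'_def by (rule form_conj[OF FB P])
  have comb_eval: "C y (comb v) = (\<Sum>j\<in>{0..<n}. v $ j * C y (bs ! j))"
    if F: "invariant_supersymmetric_form sc G0 G1 br C" for C y v
  proof -
    note add2 = form_props(2)[OF F]
    note sc2 = form_props(4)[OF F]
    have z2: "C y 0 = 0" using add2[of y 0 0] by simp
    have "C y (comb v) = (\<Sum>j\<in>{0..<n}. C y (sc (v $ j) (bs ! j)))"
      unfolding comb_def
      using sum_comp_morphism[of "C y" "\<lambda>j. sc (v $ j) (bs ! j)" "{0..<n}"] z2 add2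
      by (simp add: o_def)
    then show ?thesis by (simp add: sc2)
  qed
  have mat_eval: "(mf C *\<^sub>v v) $ i = C (bs ! i) (comb v)"
    if F: "invariant_supersymmetric_form sc G0 G1 br C" and v: "v \<in> carrier_vec n" and i: "i < n" for C v i
    using v i unfolding comb_eval[OF F] mf_def
    by (auto simp: scalar_prod_def mult.commute intro!: sum.cong)
  have span_zero: "C b a = 0"
    if F: "invariant_supersymmetric_form sc G0 G1 br C" and h: "\<forall>i<n. C (bs ! i) a = 0" for C a b
  proof -
    note add1 = form_props(1)[OF F]
    note sc1 = form_props(3)[OF F]
    have z1: "C 0 a = 0" using add1[of 0 0 a] by simp
    have "b \<in> span Basis" using span_Basis by simp
    then show ?thesis
    proof (induction rule: span_induct_alt)
      case base then show ?case by (rule z1)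
    next
      case (step c x y)
      from step(1) obtain i where "i < n" "x = bs ! i" unfolding sbs[symmetric] n_def
        by (auto simp: in_set_conv_nth)
      then show ?case using step(2) h add1 sc1 by simp
    qed
  qed
  have comb_inj: "v = 0\<^sub>v n" if v: "v \<in> carrier_vec n" and c0: "comb v = 0" for v
  proof -
    have inj: "inj_on ((!) bs) {0..<n}" using dbs unfolding n_def
      by (auto intro!: inj_on_nth)
    have img: "(!) bs ` {0..<n} = Basis" unfolding sbs[symmetric] n_def
      by (auto simp: in_set_conv_nth image_iff) (use atLeastLessThan_iff in blast)
    define u where "u = (\<lambda>w. v $ (inv_into {0..<n} ((!) bs) w))"
    have "(\<Sum>w\<in>Basis. sc (u w) w) = (\<Sum>j\<in>{0..<n}. sc (u (bs ! j)) (bs ! j))"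
      unfolding img[symmetric] by (rule sum.reindex[OF inj, unfolded o_def])
    also have "\<dots> = comb v" unfolding comb_def u_def
      by (rule sum.cong) (auto simp: inv_into_f_f[OF inj])
    finally have "(\<Sum>w\<in>Basis. sc (u w) w) = 0" using c0 by simp
    then have "\<forall>w\<in>Basis. u w = 0" using independent_Basis independent_explicit by blast
    then have "\<forall>j<n. v $ j = 0" unfolding u_def img[symmetric]
      using inv_into_f_f[OF inj] by fastforce
    then show ?thesis using v by (intro eq_vecI) auto
  qed
  have ideal_univ: "\<forall>a b. C b a = 0"
    if F: "invariant_supersymmetric_form sc G0 G1 br C" and v: "v \<in> carrier_vec n" "v \<noteq> 0\<^sub>v n"
      and h: "\<forall>i<n. C (bs ! i) (comb v) = 0" for C v
  proof -
    have "comb v \<in> {a. \<forall>b. C b a = 0}" using span_zero[OF F h] by simp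
    moreover have "comb v \<noteq> 0" using comb_inj v by blast
    ultimately have "{a. \<forall>b. C b a = 0} = UNIV"
      using ideal_cases[OF form_ideal[OF L F]] by blast
    then show ?thesis by blast
  qed
  have Mc: "mf B \<in> carrier_mat n n" and M'c: "mf B' \<in> carrier_mat n n" unfolding mf_def by auto
  have detM: "det (mf B) \<noteq> 0"
  proof
    assume "det (mf B) = 0"
    then obtain v where v: "v \<in> carrier_vec n" "v \<noteq> 0\<^sub>v n" and Mv: "mf B *\<^sub>v v = 0\<^sub>v n"
      using det_0_iff_vec_prod_zero_field[OF Mc] by auto
    have "\<forall>i<n. B (bs ! i) (comb v) = 0"
    proof (intro allI impI)
      fix i assume i: "i < n"
      have "(mf B *\<^sub>v v) $ i = 0" using Mv i by simp
      then show "B (bs ! i) (comb v) = 0" using mat_eval[OF FB v(1) i] by simp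
    qed
    then have "\<forall>a b. B b a = 0" using ideal_univ[OF FB v] by blast
    then show False using assms(6) by simp
  qed
  from det_non_zero_imp_unit[OF Mc detM, of "()"] obtain Mi where
    Mic: "Mi \<in> carrier_mat n n" and MiM: "Mi * mf B = 1\<^sub>m n" and MMi: "mf B * Mi = 1\<^sub>m n"
    unfolding Units_def ring_mat_def by auto
  define A where "A = Mi * mf B'"
  have Ac: "A \<in> carrier_mat n n" unfolding A_def using Mic M'c by auto
  have n0: "n \<noteq> 0"
  proof
    assume "n = 0"
    then have "Basis = {}" using sbs n_def by auto
    then have "x = 0" using span_Basis by auto
    moreover have "B 0 0 = 0"
    proof -
      have "B 0 (0+0) = B 0 0 + B 0 0" by (rule form_props(2)[OF FB])
      then show ?thesis by simp
    qed
    ultimately show False using assms(6) by simp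
  qed
  obtain as where cp: "char_poly A = (\<Prod>a\<leftarrow>as. [:- a, 1:])" and las: "length as = n"
    using char_poly_factorized[OF Ac] by auto
  define e where "e = hd as"
  have "e \<in> set as" using las n0 unfolding e_def by (cases as) auto
  then have "poly (char_poly A) e = 0" unfolding cp poly_prod_list
    by (auto simp: prod_list_zero_iff)
  then have "eigenvalue A e" using eigenvalue_root_char_poly[OF Ac] by simp
  then obtain v where v: "v \<in> carrier_vec n" "v \<noteq> 0\<^sub>v n" and Av: "A *\<^sub>v v = e \<cdot>\<^sub>v v"
    unfolding eigenvalue_def eigenvector_def using Ac by auto
  have "mf B' *\<^sub>v v = (mf B * Mi * mf B') *\<^sub>v v" using MMi M'c by simp
  also have "\<dots> = (mf B * A) *\<^sub>v v" unfolding A_def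
    by (simp add: assoc_mult_mat[OF Mc Mic M'c])
  also have "\<dots> = mf B *\<^sub>v (A *\<^sub>v v)" by (rule assoc_mult_mat_vec[OF Mc Ac v(1)])
  also have "\<dots> = e \<cdot>\<^sub>v (mf B *\<^sub>v v)" using Av Mc v by (simp add: mult_mat_vec)
  finally have eq: "mf B' *\<^sub>v v = e \<cdot>\<^sub>v (mf B *\<^sub>v v)" .
  define C where "C = (\<lambda>a b. B' a b - e * B a b)"
  have FC: "invariant_supersymmetric_form sc G0 G1 br C"
    unfolding C_def by (rule form_lincomb[OF FB' FB])
  have "\<forall>i<n. C (bs ! i) (comb v) = 0"
  proof (intro allI impI)
    fix i assume i: "i < n"
    have "(mf B' *\<^sub>v v) $ i = e * (mf B *\<^sub>v v) $ i" using eq i Mc by simp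
    then show "C (bs ! i) (comb v) = 0"
      unfolding C_def mat_eval[OF FB v(1) i, symmetric] mat_eval[OF FB' v(1) i, symmetric] by simp
  qed
  then have C0: "\<forall>a b. C b a = 0" using ideal_univ[OF FC v] by blast
  have "B' x x = B x x" unfolding B'_def using assms(5,7) by (simp add: Reals_cnj_iff)
  moreover have "B' x x - e * B x x = 0" using C0 unfolding C_def by blast
  ultimately have "(1 - e) * B x x = 0" by (simp add: algebra_simps)
  then have "e = 1" using assms(6) by simp
  then show ?thesis using C0 unfolding C_def B'_def by auto
qed

end
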